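(* Let $n\ge 2$ and $r\ge 1$, and let $d\ge 1$ be the integer with $\binom{n+d-2}{d-1}<r\le\binom{n+d-1}{d}$. Let $L_r^n\subset\mathbb{A}^n$ be the union of $r$ lines through the origin whose corresponding points in $\mathbb{P}^{n-1}$ are in uniform position. Then \[\delta(L_r^n)=dr-\binom{n+d-1}{d-1}.\]
   Context: The ground field $\k$ is algebraically closed of characteristic $0$. For a reduced curve singularity $(C,0)$ with local ring $\mathcal{O}$ and normalisation $\overline{\mathcal{O}}$, $\delta=\dim_\k\overline{\mathcal{O}}/\mathcal{O}$. A set $\Gamma$ of $r$ points in $\mathbb{P}^{n-1}$ is in general position if for every $\ell\ge1$ it imposes $\min(r,\binom{n+\ell-1}{\ell})$ independent conditions on forms of degree $\ell$; it is in uniform position if every subset of $\Gamma$ is in general position. A union of lines through the origin in $\mathbb{A}^n$ is called in general/uniform position if the corresponding point set in $\mathbb{P}^{n-1}$ is. $L_r^n$ denotes the cone over such an $r$-point set, i.e. the union of the $r$ corresponding lines through $0\in\mathbb{A}^n$. *)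

theory Defs
  imports "HOL-Library.Poly_Mapping" "HOL-Computational_Algebra.Polynomial"
    "HOL-Library.Extended_Nat" "HOL-Library.Function_Algebras"
begin

text \<open>Multivariate polynomials over 'a in the variables x_0, x_1, ... :
  finitely supported maps from monomials (exponent vectors) to coefficients.\<close>
type_synonym 'a mpoly = "(nat \<Rightarrow>\<^sub>0 nat) \<Rightarrow>\<^sub>0 'a"

definition mpoly_in_vars :: "nat \<Rightarrow> 'a::zero mpoly \<Rightarrow> bool" where
  "mpoly_in_vars n p \<longleftrightarrow> (\<forall>m\<in>Poly_Mapping.keys p. Poly_Mapping.keys m \<subseteq> {..<n})"

definition mdeg :: "(nat \<Rightarrow>\<^sub>0 nat) \<Rightarrow> nat" where
  "mdeg m = (\<Sum>i\<in>Poly_Mapping.keys m. Poly_Mapping.lookup m i)"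

definition homogeneous :: "nat \<Rightarrow> 'a::zero mpoly \<Rightarrow> bool" where
  "homogeneous l p \<longleftrightarrow> (\<forall>m\<in>Poly_Mapping.keys p. mdeg m = l)"

definition mpeval :: "'a::comm_semiring_1 mpoly \<Rightarrow> (nat \<Rightarrow> 'a) \<Rightarrow> 'a" where
  "mpeval p x = (\<Sum>m\<in>Poly_Mapping.keys p. Poly_Mapping.lookup p m * (\<Prod>i\<in>Poly_Mapping.keys m. x i ^ Poly_Mapping.lookup m i))"

text \<open>restriction of p to the line through v: the univariate polynomial t \<mapsto> p(t v)\<close>
definition mpeval_line :: "'a::comm_semiring_1 mpoly \<Rightarrow> (nat \<Rightarrow> 'a) \<Rightarrow> 'a poly" where
  "mpeval_line p v =
     (\<Sum>m\<in>Poly_Mapping.keys p. monom (Poly_Mapping.lookup p m * (\<Prod>i\<in>Poly_Mapping.keys m. v i ^ Poly_Mapping.lookup m i)) (mdeg m))"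

text \<open>v 0, ..., v (r-1) are homogeneous coordinate vectors (in k^n, coordinates
  j < n) of r distinct points of P^(n-1).\<close>
definition distinct_proj_points :: "nat \<Rightarrow> nat \<Rightarrow> (nat \<Rightarrow> nat \<Rightarrow> 'a::field) \<Rightarrow> bool" where
  "distinct_proj_points n r v \<longleftrightarrow>
     (\<forall>i<r. v i \<noteq> (\<lambda>_. 0) \<and> (\<forall>j\<ge>n. v i j = 0)) \<and>
     (\<forall>i<r. \<forall>j<r. i \<noteq> j \<longrightarrow> \<not> (\<exists>c. v i = (\<lambda>k. c * v j k)))"

definition eval_vectors :: "nat \<Rightarrow> (nat \<Rightarrow> nat \<Rightarrow> 'a::field) \<Rightarrow> nat set \<Rightarrow> nat \<Rightarrow> (nat \<Rightarrow> 'a) set" where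
  "eval_vectors n v J l =
     {(\<lambda>i. if i \<in> J then mpeval p (v i) else 0) | p. mpoly_in_vars n p \<and> homogeneous l p}"

definition conditions_imposed :: "nat \<Rightarrow> (nat \<Rightarrow> nat \<Rightarrow> 'a::field) \<Rightarrow> nat set \<Rightarrow> nat \<Rightarrow> nat" where
  "conditions_imposed n v J l =
     vector_space.dim (\<lambda>(c::'a) (f::nat \<Rightarrow> 'a) i. c * f i) (eval_vectors n v J l)"

definition general_position :: "nat \<Rightarrow> (nat \<Rightarrow> nat \<Rightarrow> 'a::field) \<Rightarrow> nat set \<Rightarrow> bool" where
  "general_position n v J \<longleftrightarrow>
     (\<forall>l\<ge>1. conditions_imposed n v J l = min (card J) ((n + l - 1) choose l))"

definition uniform_position :: "nat \<Rightarrow> nat \<Rightarrow> (nat \<Rightarrow> nat \<Rightarrow> 'a::field) \<Rightarrow> bool" where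
  "uniform_position n r v \<longleftrightarrow> (\<forall>J\<subseteq>{..<r}. general_position n v J)"

text \<open>Normalisation of the union of the r lines: product of r copies of k[t]
  (one parametrisation t \<mapsto> t v_i per line).\<close>
definition normalisation_ring :: "nat \<Rightarrow> (nat \<Rightarrow> 'a::zero poly) set" where
  "normalisation_ring r = {f. \<forall>i\<ge>r. f i = 0}"

text \<open>Coordinate ring of the union of lines, embedded in its normalisation
  via p \<mapsto> (p(t v_i))_i.\<close>
definition curve_ring :: "nat \<Rightarrow> nat \<Rightarrow> (nat \<Rightarrow> nat \<Rightarrow> 'a::field) \<Rightarrow> (nat \<Rightarrow> 'a poly) set" where
  "curve_ring n r v =
     {(\<lambda>i. if i < r then mpeval_line p (v i) else 0) | p. mpoly_in_vars n p}"

definition quotient_dim :: "(nat \<Rightarrow> 'a::field poly) set \<Rightarrow> (nat \<Rightarrow> 'a poly) set \<Rightarrow> enat" where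
  "quotient_dim N W = Sup {enat (card S) | S. finite S \<and> S \<subseteq> N \<and>
      (\<forall>c::(nat \<Rightarrow> 'a poly) \<Rightarrow> 'a.
         (\<lambda>i. \<Sum>s\<in>S. smult (c s) (s i)) \<in> W \<longrightarrow> (\<forall>s\<in>S. c s = 0))}"

definition delta_lines :: "nat \<Rightarrow> nat \<Rightarrow> (nat \<Rightarrow> nat \<Rightarrow> 'a::field) \<Rightarrow> enat" where
  "delta_lines n r v = quotient_dim (normalisation_ring r) (curve_ring n r v)"

end

theory Submission
  imports Defs
begin


lemma sum_fun_apply: "(\<Sum>x\<in>A. f x) i = (\<Sum>x\<in>A. f x i)"
  by (induction A rule: infinite_finite_induct) auto

interpretation K: vector_space "\<lambda>(c::'a::field) (f::nat\<Rightarrow>'a) i. c * f i"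
  by unfold_locales (auto simp: fun_eq_iff algebra_simps)

interpretation P: vector_space "\<lambda>(c::'a::field) (f::nat\<Rightarrow>'a poly) i. smult c (f i)"
  by unfold_locales (auto simp: fun_eq_iff algebra_simps smult_add_right smult_add_left)

definition mono :: "(nat \<Rightarrow>\<^sub>0 nat) \<Rightarrow> (nat \<Rightarrow> 'a::comm_semiring_1) \<Rightarrow> 'a" where
  "mono m x = (\<Prod>i\<in>Poly_Mapping.keys m. x i ^ Poly_Mapping.lookup m i)"

lemma mpeval_superset:
  assumes "finite A" "Poly_Mapping.keys p \<subseteq> A"
  shows "mpeval p x = (\<Sum>m\<in>A. Poly_Mapping.lookup p m * mono m x)"
  unfolding mpeval_def mono_def
  by (rule sum.mono_neutral_left) (use assms in \<open>auto simp: in_keys_iff\<close>)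

lemma mpeval_line_superset:
  assumes "finite A" "Poly_Mapping.keys p \<subseteq> A"
  shows "mpeval_line p x = (\<Sum>m\<in>A. monom (Poly_Mapping.lookup p m * mono m x) (mdeg m))"
  unfolding mpeval_line_def mono_def
  by (rule sum.mono_neutral_left) (use assms in \<open>auto simp: in_keys_iff\<close>)

definition hp :: "nat \<Rightarrow> 'a::zero mpoly \<Rightarrow> 'a mpoly" where
  "hp l p = Abs_poly_mapping (\<lambda>m. if mdeg m = l then Poly_Mapping.lookup p m else 0)"

lemma lookup_hp: "Poly_Mapping.lookup (hp l p) m = (if mdeg m = l then Poly_Mapping.lookup p m else 0)"
proof -
  have "finite {m. (if mdeg m = l then Poly_Mapping.lookup p m else 0) \<noteq> 0}"
    by (rule finite_subset[OF _ finite_lookup[of p]]) auto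
  then show ?thesis unfolding hp_def by simp
qed

lemma keys_hp: "Poly_Mapping.keys (hp l p) = {m \<in> Poly_Mapping.keys p. mdeg m = l}"
  by (auto simp: in_keys_iff lookup_hp split: if_splits)

lemma hp_homogeneous: "homogeneous l (hp l p)"
  by (auto simp: homogeneous_def keys_hp)

lemma hp_vars: "mpoly_in_vars n p \<Longrightarrow> mpoly_in_vars n (hp l p)"
  by (auto simp: mpoly_in_vars_def keys_hp)

lemma coeff_mpeval_line: "coeff (mpeval_line p x) l = mpeval (hp l p) x"
proof -
  have "coeff (mpeval_line p x) l = (\<Sum>m\<in>Poly_Mapping.keys p. (if mdeg m = l then Poly_Mapping.lookup p m else 0) * mono m x)"
    by (simp add: mpeval_line_superset[OF finite_keys order_refl] coeff_sum coeff_monom) (rule sum.cong, auto)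
  also have "\<dots> = mpeval (hp l p) x"
    by (subst mpeval_superset[OF finite_keys[of p]]) (auto simp: keys_hp lookup_hp)
  finally show ?thesis .
qed

lemma homog_line: "homogeneous l p \<Longrightarrow> mpeval_line p x = monom (mpeval p x) l"
  unfolding mpeval_line_def mpeval_def homogeneous_def
  by (simp add: monom_sum)

definition psc :: "'a::comm_semiring_1 \<Rightarrow> 'a mpoly \<Rightarrow> 'a mpoly" where
  "psc c p = Abs_poly_mapping (\<lambda>m. c * Poly_Mapping.lookup p m)"

lemma lookup_psc: "Poly_Mapping.lookup (psc c p) m = c * Poly_Mapping.lookup p m"
proof -
  have "finite {m. c * Poly_Mapping.lookup p m \<noteq> 0}"
    by (rule finite_subset[OF _ finite_lookup[of p]]) auto
  then show ?thesis unfolding psc_def by simp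
qed

lemma keys_psc: "Poly_Mapping.keys (psc c p) \<subseteq> Poly_Mapping.keys p"
  by (auto simp: in_keys_iff lookup_psc)

lemma smult_sum_right: "smult c (\<Sum>x\<in>A. f x) = (\<Sum>x\<in>A. smult c (f x))"
  by (induction A rule: infinite_finite_induct) (auto simp: smult_add_right)

lemma line_psc: "mpeval_line (psc c p) x = smult c (mpeval_line p x)"
proof -
  have "mpeval_line (psc c p) x = (\<Sum>m\<in>Poly_Mapping.keys p. monom (Poly_Mapping.lookup (psc c p) m * mono m x) (mdeg m))"
    by (rule mpeval_line_superset[OF finite_keys keys_psc])
  also have "\<dots> = smult c (\<Sum>m\<in>Poly_Mapping.keys p. monom (Poly_Mapping.lookup p m * mono m x) (mdeg m))"
    by (simp add: smult_sum_right smult_monom lookup_psc mult.assoc)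
  also have "\<dots> = smult c (mpeval_line p x)"
    by (simp add: mpeval_line_superset[OF finite_keys order_refl])
  finally show ?thesis .
qed

lemma line_add: "mpeval_line (p + q) x = mpeval_line p x + mpeval_line q x"
proof -
  let ?A = "Poly_Mapping.keys p \<union> Poly_Mapping.keys q"
  have f: "finite ?A" by simp
  show ?thesis
    by (simp add: mpeval_line_superset[OF f keys_add] mpeval_line_superset[OF f, of p]
       mpeval_line_superset[OF f, of q] lookup_add distrib_right add_monom[symmetric] sum.distrib)
qed

lemma line_zero: "mpeval_line 0 x = 0"
  by (simp add: mpeval_line_def)

lemma vars_add: "mpoly_in_vars n p \<Longrightarrow> mpoly_in_vars n q \<Longrightarrow> mpoly_in_vars n (p + q)"
  using keys_add[of p q] by (auto simp: mpoly_in_vars_def)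

lemma vars_psc: "mpoly_in_vars n p \<Longrightarrow> mpoly_in_vars n (psc c p)"
  using keys_psc[of c p] by (auto simp: mpoly_in_vars_def)

lemma W_subspace:
  "P.subspace (curve_ring n r v :: (nat \<Rightarrow> 'a::field poly) set)"
  unfolding P.subspace_def curve_ring_def
proof (intro conjI ballI allI)
  show "(0::nat\<Rightarrow>'a poly) \<in> {\<lambda>i. if i < r then mpeval_line p (v i) else 0 |p. mpoly_in_vars n p}"
    by (rule CollectI, rule exI[of _ 0]) (auto simp: mpoly_in_vars_def line_zero fun_eq_iff)
next
  fix x y :: "nat \<Rightarrow> 'a poly"
  assume "x \<in> {\<lambda>i. if i < r then mpeval_line p (v i) else 0 |p. mpoly_in_vars n p}"
    "y \<in> {\<lambda>i. if i < r then mpeval_line p (v i) else 0 |p. mpoly_in_vars n p}"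
  then obtain p q where "mpoly_in_vars n p" "mpoly_in_vars n q"
    "x = (\<lambda>i. if i < r then mpeval_line p (v i) else 0)" "y = (\<lambda>i. if i < r then mpeval_line q (v i) else 0)"
    by blast
  then show "x + y \<in> {\<lambda>i. if i < r then mpeval_line p (v i) else 0 |p. mpoly_in_vars n p}"
    by (intro CollectI exI[of _ "p + q"]) (auto simp: vars_add line_add fun_eq_iff)
next
  fix c :: 'a and x :: "nat \<Rightarrow> 'a poly"
  assume "x \<in> {\<lambda>i. if i < r then mpeval_line p (v i) else 0 |p. mpoly_in_vars n p}"
  then obtain p where "mpoly_in_vars n p"
    "x = (\<lambda>i. if i < r then mpeval_line p (v i) else 0)"
    by blast
  then show "(\<lambda>i. smult c (x i)) \<in> {\<lambda>i. if i < r then mpeval_line p (v i) else 0 |p. mpoly_in_vars n p}"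
    by (intro CollectI exI[of _ "psc c p"]) (auto simp: vars_psc line_psc fun_eq_iff)
qed



definition Kr :: "nat \<Rightarrow> (nat \<Rightarrow> 'a::zero) set" where
  "Kr r = {a. \<forall>i\<ge>r. a i = 0}"

definition delta :: "nat \<Rightarrow> nat \<Rightarrow> 'a::{zero,one}" where
  "delta j = (\<lambda>i. if i = j then 1 else 0)"

lemma delta_inj: "inj (delta :: nat \<Rightarrow> nat \<Rightarrow> 'a::zero_neq_one)"
  by (auto simp: inj_def delta_def fun_eq_iff)

lemma Kr_span: "Kr r \<subseteq> K.span (delta ` {..<r} :: (nat \<Rightarrow> 'a::field) set)"
proof
  fix a :: "nat \<Rightarrow> 'a" assume a: "a \<in> Kr r"
  have "a = (\<Sum>j<r. (\<lambda>i. a j * delta j i))"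
  proof (rule ext)
    fix x
    have "(\<Sum>j<r. a j * delta j x) = (\<Sum>j<r. if x = j then a j else 0)"
      by (rule sum.cong) (auto simp: delta_def)
    then show "a x = (\<Sum>j<r. (\<lambda>i. a j * delta j i)) x"
      using a by (simp add: sum_fun_apply Kr_def not_less)
  qed
  also have "\<dots> \<in> K.span (delta ` {..<r})"
    by (intro K.span_sum K.span_scale K.span_base) auto
  finally show "a \<in> K.span (delta ` {..<r})" .
qed

lemma delta_indep: "K.independent (delta ` {..<r} :: (nat \<Rightarrow> 'a::field) set)"
proof -
  have "\<forall>w\<in>delta ` {..<r}. u w = 0" if h: "(\<Sum>w\<in>delta ` {..<r}. (\<lambda>i. u w * w i)) = (0::nat\<Rightarrow>'a)" for u
  proof
    fix w :: "nat \<Rightarrow> 'a" assume "w \<in> delta ` {..<r}"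
    then obtain j where j: "j < r" "w = delta j" by auto
    have "0 = (\<Sum>w\<in>delta ` {..<r}. (\<lambda>i. u w * w i)) j" using h by simp
    also have "\<dots> = (\<Sum>k<r. u (delta k) * delta k j)"
      by (simp add: sum_fun_apply sum.reindex[OF inj_on_subset[OF delta_inj]])
    also have "\<dots> = (\<Sum>k<r. if k = j then u (delta j) else 0)"
      by (rule sum.cong) (auto simp: delta_def)
    also have "\<dots> = u w" using j by simp
    finally show "u w = 0" by simp
  qed
  then show ?thesis by (subst K.dependent_finite) auto
qed

lemma dim_Kr: "K.dim (Kr r :: (nat \<Rightarrow> 'a::field) set) = r"
proof -
  have "delta ` {..<r} \<subseteq> (Kr r :: (nat \<Rightarrow> 'a) set)" by (auto simp: Kr_def delta_def)
  then have "card (delta ` {..<r} :: (nat \<Rightarrow> 'a) set) = K.dim (Kr r :: (nat \<Rightarrow> 'a) set)"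
    using K.basis_card_eq_dim[OF _ Kr_span delta_indep] by blast
  moreover have "card (delta ` {..<r} :: (nat \<Rightarrow> 'a) set) = r"
    by (simp add: card_image[OF inj_on_subset[OF delta_inj]])
  ultimately show ?thesis by simp
qed

lemma complement:
  fixes E :: "(nat \<Rightarrow> 'a::field) set"
  assumes EK: "E \<subseteq> Kr r"
  obtains B where "B \<subseteq> Kr r" "finite B" "card B = r - K.dim E" "Kr r \<subseteq> K.span (E \<union> B)"
    "\<And>c. (\<Sum>b\<in>B. (\<lambda>i. c b * b i)) \<in> K.span E \<Longrightarrow> \<forall>b\<in>B. c b = 0"
proof -
  obtain BE where BE: "BE \<subseteq> E" "K.independent BE" "E \<subseteq> K.span BE" "card BE = K.dim E"
    by (rule K.basis_exists)
  obtain BB where BB: "BE \<subseteq> BB" "BB \<subseteq> Kr r" "K.independent BB" "Kr r \<subseteq> K.span BB"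
    using K.maximal_independent_subset_extend[of BE "Kr r"] BE EK by blast
  have finBB: "finite BB"
    using K.independent_span_bound[OF _ BB(3) order.trans[OF BB(2) Kr_span]] by auto
  have cardBB: "card BB = r"
    using K.basis_card_eq_dim[OF BB(2) BB(4) BB(3)] dim_Kr by simp
  have finBE: "finite BE" using finBB BB(1) finite_subset by blast
  define B where "B = BB - BE"
  have spE: "K.span E = K.span BE"
    using BE(1,3) K.span_mono K.span_span
    by (metis K.span_minimal K.subspace_span subset_antisym)
  show ?thesis
  proof
    show "B \<subseteq> Kr r" using BB unfolding B_def by auto
    show "finite B" using finBB unfolding B_def by auto
    show "card B = r - K.dim E" unfolding B_def
      using card_Diff_subset[OF finBE BB(1)] cardBB BE(4) by simp
    have "BB \<subseteq> E \<union> B" using BE(1) unfolding B_def by auto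
    then show "Kr r \<subseteq> K.span (E \<union> B)" using BB(4) K.span_mono by blast
  next
    fix c assume h: "(\<Sum>b\<in>B. (\<lambda>i. c b * b i)) \<in> K.span E"
    then obtain u where u: "(\<Sum>b\<in>B. (\<lambda>i. c b * b i)) = (\<Sum>e\<in>BE. (\<lambda>i. u e * e i))"
      unfolding spE K.span_finite[OF finBE] by auto
    define w where "w x = (if x \<in> B then c x else - u x)" for x
    have "(\<Sum>x\<in>BB. (\<lambda>i. w x * x i)) = (\<Sum>x\<in>B. (\<lambda>i. w x * x i)) + (\<Sum>x\<in>BE. (\<lambda>i. w x * x i))"
    proof -
      have "BB = B \<union> BE" "B \<inter> BE = {}" using BB(1) unfolding B_def by auto
      then show ?thesis using finBB by (simp add: sum.union_disjoint)
    qed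
    also have "(\<Sum>x\<in>B. (\<lambda>i. w x * x i)) = (\<Sum>b\<in>B. (\<lambda>i. c b * b i))"
      by (rule sum.cong) (auto simp: w_def)
    also have "(\<Sum>x\<in>BE. (\<lambda>i. w x * x i)) = - (\<Sum>e\<in>BE. (\<lambda>i. u e * e i))"
      by (simp add: sum_negf[symmetric] w_def B_def fun_eq_iff sum_fun_apply)
    finally have "(\<Sum>x\<in>BB. (\<lambda>i. w x * x i)) = 0" using u by (simp add: zero_fun_def)
    then have "\<forall>x\<in>BB. w x = 0" using BB(3) K.dependent_finite[OF finBB] by blast
    then show "\<forall>b\<in>B. c b = 0" unfolding w_def B_def by auto
  qed
qed



definition emb :: "nat \<Rightarrow> (nat \<Rightarrow> 'a::zero) \<Rightarrow> nat \<Rightarrow> 'a poly" where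
  "emb l a = (\<lambda>i. monom (a i) l)"

lemma emb_span:
  fixes X :: "(nat \<Rightarrow> 'a::field) set"
  assumes "a \<in> K.span X" shows "emb l a \<in> P.span (emb l ` X)"
  using assms
proof (induction rule: K.span_induct_alt)
  case base
  have "emb l (\<lambda>_. 0::'a) = (\<lambda>_. 0)" by (simp add: emb_def fun_eq_iff)
  then show ?case using P.span_zero by (simp add: zero_fun_def)
next
  case (step c x y)
  have "emb l ((\<lambda>i. c * x i) + y) = (\<lambda>i. smult c (emb l x i)) + emb l y"
    by (simp add: emb_def fun_eq_iff smult_monom add_monom)
  then show ?case using step
    by (metis P.span_add P.span_base P.span_scale imageI)
qed

lemma UB:
  fixes W B N S :: "(nat \<Rightarrow> 'a::field poly) set"
  assumes W: "P.subspace W" and finB: "finite B" and N: "N \<subseteq> P.span (W \<union> B)"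
    and SN: "S \<subseteq> N" and finS: "finite S"
    and ind: "\<forall>c. (\<lambda>i. \<Sum>s\<in>S. smult (c s) (s i)) \<in> W \<longrightarrow> (\<forall>s\<in>S. c s = 0)"
  shows "card S \<le> card B"
proof -
  have spW: "P.span W = W" using W by simp
  have "\<forall>s\<in>S. \<exists>q. s = fst q + snd q \<and> fst q \<in> W \<and> snd q \<in> P.span B"
  proof
    fix s assume "s \<in> S"
    then have "s \<in> P.span (W \<union> B)" using SN N by blast
    then obtain w b where "s = w + b" "w \<in> W" "b \<in> P.span B"
      unfolding P.span_Un spW by blast
    then show "\<exists>q. s = fst q + snd q \<and> fst q \<in> W \<and> snd q \<in> P.span B"
      by (intro exI[of _ "(w, b)"]) simp
  qed
  then obtain g where g: "\<forall>s\<in>S. s = fst (g s) + snd (g s) \<and> fst (g s) \<in> W \<and> snd (g s) \<in> P.span B"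
    by (rule bchoice[elim_format]) blast
  define wf where "wf s = fst (g s)" for s
  define bf where "bf s = snd (g s)" for s
  have wb: "\<And>s. s \<in> S \<Longrightarrow> s = wf s + bf s \<and> wf s \<in> W \<and> bf s \<in> P.span B"
    using g unfolding wf_def bf_def by blast
  have decomp: "(\<lambda>i. \<Sum>s\<in>S. smult (c s) (s i)) =
      (\<Sum>s\<in>S. (\<lambda>i. smult (c s) (wf s i))) + (\<Sum>s\<in>S. (\<lambda>i. smult (c s) (bf s i)))" for c
  proof (rule ext)
    fix i
    have "(\<Sum>s\<in>S. smult (c s) (s i)) = (\<Sum>s\<in>S. smult (c s) (wf s i) + smult (c s) (bf s i))"
    proof (rule sum.cong)
      fix s assume "s \<in> S"
      then have "s i = wf s i + bf s i" using wb by (metis plus_fun_apply)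
      then show "smult (c s) (s i) = smult (c s) (wf s i) + smult (c s) (bf s i)"
        by (simp add: smult_add_right)
    qed simp
    then show "(\<Sum>s\<in>S. smult (c s) (s i)) = ((\<Sum>s\<in>S. (\<lambda>i. smult (c s) (wf s i))) + (\<Sum>s\<in>S. (\<lambda>i. smult (c s) (bf s i)))) i"
      by (simp add: sum_fun_apply sum.distrib)
  qed
  have Wpart: "(\<Sum>s\<in>S. (\<lambda>i. smult (c s) (wf s i))) \<in> W" for c
    by (rule P.subspace_sum[OF W]) (use wb in \<open>auto intro: P.subspace_scale[OF W]\<close>)
  have inj: "inj_on bf S"
  proof (rule inj_onI, rule ccontr)
    fix s t assume st: "s \<in> S" "t \<in> S" "bf s = bf t" "s \<noteq> t"
    define c where "c x = (if x = s then 1 else if x = t then -1 else (0::'a))" for x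
    have "(\<lambda>i. \<Sum>x\<in>S. smult (c x) (x i)) = s - t"
    proof (rule ext)
      fix i
      have "(\<Sum>x\<in>S. smult (c x) (x i)) = (\<Sum>x\<in>S. (if x = s then x i else 0) - (if x = t then x i else 0))"
        by (rule sum.cong) (use st in \<open>auto simp: c_def\<close>)
      also have "\<dots> = s i - t i" using st finS by (simp add: sum_subtractf)
      finally show "(\<Sum>x\<in>S. smult (c x) (x i)) = (s - t) i" by simp
    qed
    moreover have "s - t = wf s - wf t" using wb[OF st(1)] wb[OF st(2)] st(3)
      by (metis add_diff_cancel_right)
    moreover have "wf s - wf t \<in> W" using wb st W by (simp add: P.subspace_diff)
    ultimately have "(\<lambda>i. \<Sum>x\<in>S. smult (c x) (x i)) \<in> W" by simp
    then have "\<forall>x\<in>S. c x = 0" using ind by blast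
    then show False using st by (auto simp: c_def)
  qed
  have indep: "P.independent (bf ` S)"
  proof
    assume "P.dependent (bf ` S)"
    then obtain u where u: "\<exists>y\<in>bf ` S. u y \<noteq> 0" "(\<Sum>y\<in>bf ` S. (\<lambda>i. smult (u y) (y i))) = 0"
      using P.dependent_finite[of "bf ` S"] finS by auto
    define c where "c s = u (bf s)" for s
    have "(\<Sum>s\<in>S. (\<lambda>i. smult (c s) (bf s i))) = (\<Sum>y\<in>bf ` S. (\<lambda>i. smult (u y) (y i)))"
      by (simp add: sum.reindex[OF inj] c_def)
    then have "(\<lambda>i. \<Sum>s\<in>S. smult (c s) (s i)) \<in> W"
      using decomp[of c] Wpart[of c] u(2) by simp
    then have "\<forall>s\<in>S. c s = 0" using ind by blast
    then show False using u(1) by (auto simp: c_def)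
  qed
  have "bf ` S \<subseteq> P.span B" using wb by auto
  then have "card (bf ` S) \<le> card B" using P.independent_span_bound[OF finB indep] by blast
  then show ?thesis using card_image[OF inj] by simp
qed



lemma E_sub_Kr: "eval_vectors n v {..<r} l \<subseteq> Kr r"
  by (auto simp: eval_vectors_def Kr_def)

lemma emb_E_W: "emb l ` eval_vectors n v {..<r} l \<subseteq> curve_ring n r (v :: nat \<Rightarrow> nat \<Rightarrow> 'a::field)"
proof
  fix x assume "x \<in> emb l ` eval_vectors n v {..<r} l"
  then obtain p where p: "mpoly_in_vars n p" "homogeneous l p"
    "x = emb l (\<lambda>i. if i \<in> {..<r} then mpeval p (v i) else 0)"
    unfolding eval_vectors_def by blast
  have "x = (\<lambda>i. if i < r then mpeval_line p (v i) else 0)"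
    using p by (auto simp: emb_def fun_eq_iff homog_line)
  then show "x \<in> curve_ring n r v" using p(1) unfolding curve_ring_def by blast
qed

lemma coeff_W:
  assumes "w \<in> curve_ring n r (v :: nat \<Rightarrow> nat \<Rightarrow> 'a::field)"
  shows "(\<lambda>i. coeff (w i) l) \<in> eval_vectors n v {..<r} l"
proof -
  obtain p where p: "mpoly_in_vars n p" "w = (\<lambda>i. if i < r then mpeval_line p (v i) else 0)"
    using assms unfolding curve_ring_def by blast
  have "(\<lambda>i. coeff (w i) l) = (\<lambda>i. if i \<in> {..<r} then mpeval (hp l p) (v i) else 0)"
    using p by (auto simp: fun_eq_iff coeff_mpeval_line)
  then show ?thesis unfolding eval_vectors_def using hp_vars[OF p(1)] hp_homogeneous by blast
qed

lemma mdeg_0: "mdeg m = 0 \<Longrightarrow> m = 0"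
proof -
  assume "mdeg m = 0"
  then have "\<forall>i\<in>Poly_Mapping.keys m. Poly_Mapping.lookup m i = 0"
    unfolding mdeg_def by (simp add: sum_eq_0_iff)
  then have "Poly_Mapping.keys m = {}" by (auto simp: in_keys_iff simp del: keys_eq_empty)
  then show ?thesis by (simp only: keys_eq_empty)
qed

lemma dim_E0:
  assumes "r \<ge> 1"
  shows "K.dim (eval_vectors n v {..<r} 0 :: (nat \<Rightarrow> 'a::field) set) = 1"
proof -
  define one :: "nat \<Rightarrow> 'a" where "one = (\<lambda>i. if i \<in> {..<r} then 1 else 0)"
  have "one \<in> eval_vectors n v {..<r} 0"
  proof -
    have m1: "mpeval (Poly_Mapping.single 0 (1::'a)) x = 1" for x
      by (simp add: mpeval_def)
    have m1': "mpeval (1::'a mpoly) x = 1" for x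
      by (simp add: mpeval_def)
    moreover have "homogeneous 0 (Poly_Mapping.single 0 (1::'a))" "mpoly_in_vars n (Poly_Mapping.single 0 (1::'a))"
      by (auto simp: homogeneous_def mdeg_def mpoly_in_vars_def)
    ultimately have "(\<lambda>i. if i \<in> {..<r} then mpeval (Poly_Mapping.single 0 (1::'a)) (v i) else 0) \<in> eval_vectors n v {..<r} 0"
      unfolding eval_vectors_def by blast
    moreover have "(\<lambda>i. if i \<in> {..<r} then mpeval (Poly_Mapping.single 0 (1::'a)) (v i) else 0) = one"
      by (auto simp: one_def m1 m1' fun_eq_iff)
    ultimately show ?thesis by simp
  qed
  moreover have "eval_vectors n v {..<r} 0 \<subseteq> K.span {one}"
  proof
    fix a assume "a \<in> eval_vectors n v {..<r} (0::nat)"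
    then obtain p where p: "homogeneous 0 p" "a = (\<lambda>i. if i \<in> {..<r} then mpeval p (v i) else 0)"
      unfolding eval_vectors_def by blast
    have ks: "Poly_Mapping.keys p \<subseteq> {0}" using p(1) mdeg_0 by (auto simp: homogeneous_def)
    have "mpeval p x = Poly_Mapping.lookup p 0" for x
      by (simp add: mpeval_superset[OF _ ks] mono_def)
    then have "a = (\<lambda>i. Poly_Mapping.lookup p 0 * one i)" using p(2) by (auto simp: one_def fun_eq_iff)
    then show "a \<in> K.span {one}" by (metis K.span_base K.span_scale singletonI)
  qed
  moreover have "one \<noteq> 0" using assms by (auto simp: one_def fun_eq_iff intro!: exI[of _ 0])
  ultimately have "card {one} = K.dim (eval_vectors n v {..<r} 0)"
    by (intro K.basis_card_eq_dim) auto
  then show ?thesis by simp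
qed

lemma choose_step: "n \<ge> 1 \<Longrightarrow> (n + l - 1) choose l \<le> (n + Suc l - 1) choose (Suc l)"
proof -
  assume "n \<ge> 1"
  then obtain m where m: "n + l - 1 = m" "n + Suc l - 1 = Suc m"
    using \<open>n \<ge> 1\<close> by (intro that[of "n + l - 1"]) auto
  have "Suc m choose Suc l = (m choose l) + (m choose (Suc l))" by simp
  then show ?thesis using m by simp
qed

lemma choose_mono: "n \<ge> 1 \<Longrightarrow> l \<le> l' \<Longrightarrow> (n + l - 1) choose l \<le> (n + l' - 1) choose l'"
  using lift_Suc_mono_le[of "\<lambda>l. (n + l - 1) choose l"] choose_step by blast



theorem mainTheorem1:
  fixes n r d :: nat and v :: "nat \<Rightarrow> nat \<Rightarrow> 'a::field_char_0"
  assumes alg_closed: "\<forall>p::'a poly. degree p \<noteq> 0 \<longrightarrow> (\<exists>x. poly p x = 0)"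
    and "n \<ge> 2" and "r \<ge> 1" and "d \<ge> 1"
    and "(n + d - 2) choose (d - 1) < r" and "r \<le> (n + d - 1) choose d"
    and "distinct_proj_points n r v"
    and "uniform_position n r v"
  shows "\<exists>k. delta_lines n r v = enat k \<and>
           int k = int d * int r - int ((n + d - 1) choose (d - 1))"
proof -
  note n2 = \<open>n \<ge> 2\<close> and r1 = \<open>r \<ge> 1\<close> and d1 = \<open>d \<ge> 1\<close>
    and lowr = \<open>(n + d - 2) choose (d - 1) < r\<close> and upr = \<open>r \<le> (n + d - 1) choose d\<close>
  define E where "E l = eval_vectors n v {..<r} l" for l
  define H where "H l = K.dim (E l)" for l
  define W where "W = curve_ring n r v"
  define N where "N = (normalisation_ring r :: (nat \<Rightarrow> 'a poly) set)"
  have H0: "H 0 = 1" unfolding H_def E_def using dim_E0[OF r1] by simp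
  have Hl: "H l = min r ((n + l - 1) choose l)" if "l \<ge> 1" for l
  proof -
    have "general_position n v {..<r}" using \<open>uniform_position n r v\<close>
      unfolding uniform_position_def by blast
    then show ?thesis using that unfolding general_position_def conditions_imposed_def H_def E_def
      by simp
  qed
  define Q where "Q l B \<longleftrightarrow> B \<subseteq> Kr r \<and> finite B \<and> card B = r - H l \<and> Kr r \<subseteq> K.span (E l \<union> B) \<and>
      (\<forall>c. (\<Sum>b\<in>B. (\<lambda>i. c b * b i)) \<in> K.span (E l) \<longrightarrow> (\<forall>b\<in>B. c b = 0))" for l B
  have ex: "\<exists>B. Q l B" for l
  proof -
    obtain B where "B \<subseteq> Kr r" "finite B" "card B = r - K.dim (E l)" "Kr r \<subseteq> K.span (E l \<union> B)"
      "\<And>c. (\<Sum>b\<in>B. (\<lambda>i. c b * b i)) \<in> K.span (E l) \<Longrightarrow> \<forall>b\<in>B. c b = 0"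
      by (rule complement[OF E_sub_Kr[of n v r l, folded E_def]]) (rule that, auto)
    then have "Q l B" unfolding Q_def H_def by blast
    then show ?thesis by blast
  qed
  define Bl where "Bl l = (SOME B. Q l B)" for l
  have QB: "Q l (Bl l)" for l unfolding Bl_def by (rule someI_ex[OF ex])
  have Bl: "\<And>l. Bl l \<subseteq> Kr r" "\<And>l. finite (Bl l)" "\<And>l. card (Bl l) = r - H l"
    "\<And>l. Kr r \<subseteq> K.span (E l \<union> Bl l)"
    "\<And>l c. (\<Sum>b\<in>Bl l. (\<lambda>i. c b * b i)) \<in> K.span (E l) \<Longrightarrow> \<forall>b\<in>Bl l. c b = 0"
    using QB unfolding Q_def by blast+
  have Bl_nz: "b \<noteq> 0" if "b \<in> Bl l" for b l
  proof
    assume b0: "b = 0"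
    define c where "c x = (if x = b then 1 else (0::'a))" for x
    have "(\<Sum>x\<in>Bl l. (\<lambda>i. c x * x i)) = (\<Sum>x\<in>Bl l. (if x = b then (\<lambda>i. x i) else 0))"
      by (rule sum.cong) (auto simp: c_def fun_eq_iff)
    also have "\<dots> = 0" using that Bl(2)[of l] b0 by (simp add: zero_fun_def)
    finally have "(\<Sum>x\<in>Bl l. (\<lambda>i. c x * x i)) \<in> K.span (E l)" using K.span_zero by simp
    then have "\<forall>x\<in>Bl l. c x = 0" by (rule Bl(5))
    then show False using that by (auto simp: c_def)
  qed
  have n1: "n \<ge> 1" using n2 by simp
  have Bempty: "Bl l = {}" if "l \<ge> d" for l
  proof -
    have "r \<le> (n + l - 1) choose l"
      using upr choose_mono[OF n1 that] by simp
    then have "H l = r" using Hl[of l] that d1 by simp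
    then show ?thesis using Bl(2,3)[of l] by simp
  qed
  define Bt where "Bt = (\<Union>l<d. emb l ` Bl l)"
  have finBt: "finite Bt" unfolding Bt_def using Bl(2) by auto
  have inj_emb: "inj (emb l :: (nat \<Rightarrow> 'a) \<Rightarrow> _)" for l
  proof (rule injI)
    fix a b :: "nat \<Rightarrow> 'a" assume "emb l a = emb l b"
    then have "\<And>i. monom (a i) l = monom (b i) l" unfolding emb_def by (simp add: fun_eq_iff)
    then show "a = b" by (simp add: fun_eq_iff)
  qed
  have coeff_emb: "coeff (emb l' a i) l = (if l' = l then a i else 0)" for l' l a i
    by (simp add: emb_def coeff_monom)
  have cardBt: "card Bt = (\<Sum>l<d. r - H l)"
  proof -
    have "card Bt = (\<Sum>l<d. card (emb l ` Bl l))"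
      unfolding Bt_def
    proof (rule card_UN_disjoint)
      show "\<forall>i\<in>{..<d}. \<forall>j\<in>{..<d}. i \<noteq> j \<longrightarrow> emb i ` Bl i \<inter> emb j ` Bl j = {}"
      proof (intro ballI impI)
        fix i j :: nat assume "i \<noteq> j"
        show "emb i ` Bl i \<inter> emb j ` Bl j = {}"
        proof (rule ccontr)
          assume "emb i ` Bl i \<inter> emb j ` Bl j \<noteq> {}"
          then obtain a b where ab: "a \<in> Bl i" "b \<in> Bl j" "emb i a = emb j b" by blast
          obtain k where "a k \<noteq> 0" using Bl_nz[OF ab(1)] by (auto simp: fun_eq_iff)
          moreover have "coeff (emb i a k) i = coeff (emb j b k) i" using ab(3) by simp
          ultimately show False using \<open>i \<noteq> j\<close> by (simp add: coeff_emb)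
        qed
      qed
    qed (use Bl(2) in auto)
    also have "\<dots> = (\<Sum>l<d. r - H l)"
      by (rule sum.cong) (auto simp: card_image[OF inj_on_subset[OF inj_emb]] Bl(3))
    finally show ?thesis .
  qed
  have BtN: "Bt \<subseteq> N"
  proof
    fix x assume "x \<in> Bt"
    then obtain l b where lb: "b \<in> Bl l" "x = emb l b" unfolding Bt_def by blast
    then have "\<forall>i\<ge>r. b i = 0" using Bl(1) unfolding Kr_def by blast
    then show "x \<in> N" unfolding N_def normalisation_ring_def using lb(2) by (simp add: emb_def)
  qed
  have Bt_ind: "\<forall>c. (\<lambda>i. \<Sum>s\<in>Bt. smult (c s) (s i)) \<in> W \<longrightarrow> (\<forall>s\<in>Bt. c s = 0)"
  proof (intro allI impI ballI)
    fix c s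
    assume X: "(\<lambda>i. \<Sum>s\<in>Bt. smult (c s) (s i)) \<in> W" and s: "s \<in> Bt"
    from s obtain l b where lb: "l < d" "b \<in> Bl l" "s = emb l b" unfolding Bt_def by blast
    have sub: "emb l ` Bl l \<subseteq> Bt" using lb(1) unfolding Bt_def by blast
    have "(\<lambda>i. coeff ((\<lambda>i. \<Sum>s\<in>Bt. smult (c s) (s i)) i) l) \<in> E l"
      using coeff_W X unfolding W_def E_def by blast
    moreover have "(\<lambda>i. coeff ((\<lambda>i. \<Sum>s\<in>Bt. smult (c s) (s i)) i) l) = (\<Sum>b\<in>Bl l. (\<lambda>i. c (emb l b) * b i))"
    proof (rule ext)
      fix i
      have "coeff (\<Sum>s\<in>Bt. smult (c s) (s i)) l = (\<Sum>s\<in>Bt. c s * coeff (s i) l)"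
        by (simp add: coeff_sum)
      also have "\<dots> = (\<Sum>s\<in>emb l ` Bl l. c s * coeff (s i) l)"
      proof (rule sum.mono_neutral_right[OF finBt sub])
        show "\<forall>x\<in>Bt - emb l ` Bl l. c x * coeff (x i) l = 0"
        proof
          fix x assume x: "x \<in> Bt - emb l ` Bl l"
          then obtain l' b' where "l' < d" "b' \<in> Bl l'" "x = emb l' b'" unfolding Bt_def by blast
          with x have "l' \<noteq> l" by auto
          then show "c x * coeff (x i) l = 0" using \<open>x = emb l' b'\<close> by (simp add: coeff_emb)
        qed
      qed
      also have "\<dots> = (\<Sum>b\<in>Bl l. c (emb l b) * coeff (emb l b i) l)"
        by (simp add: sum.reindex[OF inj_on_subset[OF inj_emb]])
      also have "\<dots> = (\<Sum>b\<in>Bl l. (\<lambda>i. c (emb l b) * b i)) i"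
        by (simp add: sum_fun_apply coeff_emb)
      finally show "coeff ((\<lambda>i. \<Sum>s\<in>Bt. smult (c s) (s i)) i) l = (\<Sum>b\<in>Bl l. (\<lambda>i. c (emb l b) * b i)) i"
        by simp
    qed
    ultimately have "(\<Sum>b\<in>Bl l. (\<lambda>i. c (emb l b) * b i)) \<in> K.span (E l)"
      using K.span_superset by auto
    then have "\<forall>b\<in>Bl l. c (emb l b) = 0" using Bl(5)[where l=l and c="\<lambda>b. c (emb l b)"] by simp
    then show "c s = 0" using lb by simp
  qed
  have NW: "N \<subseteq> P.span (W \<union> Bt)"
  proof
    fix f assume f: "f \<in> N"
    then have f0: "\<And>i. i \<ge> r \<Longrightarrow> f i = 0" unfolding N_def normalisation_ring_def by blast
    define M where "M = (\<Sum>i<r. degree (f i))"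
    have degM: "degree (f i) \<le> M" for i
    proof (cases "i < r")
      case True then show ?thesis unfolding M_def by (intro member_le_sum) auto
    next
      case False then show ?thesis using f0 by simp
    qed
    have "f = (\<Sum>l\<le>M. emb l (\<lambda>i. coeff (f i) l))"
      by (rule ext) (simp add: sum_fun_apply emb_def poly_as_sum_of_monoms'[OF degM])
    also have "\<dots> \<in> P.span (W \<union> Bt)"
    proof (rule P.span_sum)
      fix l assume "l \<in> {..M}"
      have "(\<lambda>i. coeff (f i) l) \<in> Kr r" using f0 by (auto simp: Kr_def)
      then have "(\<lambda>i. coeff (f i) l) \<in> K.span (E l \<union> Bl l)" using Bl(4) by blast
      then have "emb l (\<lambda>i. coeff (f i) l) \<in> P.span (emb l ` (E l \<union> Bl l))" by (rule emb_span)
      moreover have "emb l ` (E l \<union> Bl l) \<subseteq> W \<union> Bt"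
      proof -
        have "emb l ` E l \<subseteq> W" using emb_E_W unfolding E_def W_def by blast
        moreover have "emb l ` Bl l \<subseteq> Bt"
        proof (cases "l < d")
          case True then show ?thesis unfolding Bt_def by blast
        next
          case False then show ?thesis using Bempty by simp
        qed
        ultimately show ?thesis by blast
      qed
      ultimately show "emb l (\<lambda>i. coeff (f i) l) \<in> P.span (W \<union> Bt)"
        using P.span_mono by blast
    qed
    finally show "f \<in> P.span (W \<union> Bt)" .
  qed
  define A where "A = {enat (card S) | S. finite S \<and> S \<subseteq> N \<and>
      (\<forall>c::(nat \<Rightarrow> 'a poly) \<Rightarrow> 'a. (\<lambda>i. \<Sum>s\<in>S. smult (c s) (s i)) \<in> W \<longrightarrow> (\<forall>s\<in>S. c s = 0))}"
  have dl: "delta_lines n r v = Sup A"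
    unfolding delta_lines_def quotient_dim_def A_def W_def N_def by simp
  have "Sup A = enat (card Bt)"
  proof (rule antisym)
    show "Sup A \<le> enat (card Bt)"
    proof (rule Sup_least)
      fix x assume "x \<in> A"
      then obtain S where S: "x = enat (card S)" "finite S" "S \<subseteq> N"
        "\<forall>c::(nat \<Rightarrow> 'a poly) \<Rightarrow> 'a. (\<lambda>i. \<Sum>s\<in>S. smult (c s) (s i)) \<in> W \<longrightarrow> (\<forall>s\<in>S. c s = 0)"
        unfolding A_def by blast
      have "card S \<le> card Bt"
        using UB[OF W_subspace[of n r v, folded W_def] finBt NW S(3) S(2) S(4)] .
      then show "x \<le> enat (card Bt)" using S(1) by simp
    qed
  next
    show "enat (card Bt) \<le> Sup A"
      by (rule Sup_upper) (unfold A_def, use finBt BtN Bt_ind in blast)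
  qed
  have Hlt: "H l = (n + l - 1) choose l" if "l < d" for l
  proof (cases "l = 0")
    case True then show ?thesis using H0 by simp
  next
    case False
    have "(n + l - 1) choose l \<le> (n + (d - 1) - 1) choose (d - 1)"
      using choose_mono[OF n1, of l "d - 1"] that by simp
    also have "(n + (d - 1) - 1) = n + d - 2" using d1 by simp
    finally have "(n + l - 1) choose l < r" using lowr by simp
    then show ?thesis using Hl[of l] False by simp
  qed
  have "int (card Bt) = (\<Sum>l<d. int r - int ((n + l - 1) choose l))"
  proof -
    have "int (card Bt) = (\<Sum>l<d. int (r - H l))" using cardBt by simp
    also have "\<dots> = (\<Sum>l<d. int r - int ((n + l - 1) choose l))"
    proof (rule sum.cong)
      fix l assume "l \<in> {..<d}"
      then have ld: "l < d" by simp
      have "H l \<le> r"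
      proof (cases "l = 0")
        case True then show ?thesis using H0 r1 by simp
      next
        case False then show ?thesis using Hl[of l] by simp
      qed
      then have "H l = (n + l - 1) choose l" "H l \<le> r" using Hlt[OF ld] by auto
      then show "int (r - H l) = int r - int ((n + l - 1) choose l)" by simp
    qed simp
    finally show ?thesis .
  qed
  also have "\<dots> = int d * int r - int (\<Sum>l<d. (n + l - 1) choose l)"
    by (simp add: sum_subtractf)
  also have "(\<Sum>l<d. (n + l - 1) choose l) = (n + d - 1) choose (d - 1)"
  proof -
    have "{..<d} = {..d - 1}" using d1 by auto
    then have "(\<Sum>l<d. (n + l - 1) choose l) = (\<Sum>l\<le>d - 1. ((n - 1) + l) choose l)"
      using n1 by (intro sum.cong) auto
    also have "\<dots> = Suc ((n - 1) + (d - 1)) choose (d - 1)" by (rule sum_choose_lower)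
    also have "Suc ((n - 1) + (d - 1)) = n + d - 1" using n1 d1 by simp
    finally show ?thesis .
  qed
  finally have fin: "int (card Bt) = int d * int r - int ((n + d - 1) choose (d - 1))" .
  show ?thesis
    by (rule exI[of _ "card Bt"]) (use fin dl \<open>Sup A = enat (card Bt)\<close> in simp)
qed

end
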